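(* Let $T$ be a ring and $x\in U(T)$. If $R$ is an $x$-conch subring of $T$, then $x^{-1}$ is contained in exactly one prime ideal of $R$, and this prime ideal is maximal; that is, $\sqrt{x^{-1}R}\in\mathrm{Max}(R)$.
   Context: All rings are commutative with $1\neq0$ and subrings are unital. For a unit $x\in T$, a subring $R$ of $T$ is an $x$-conch subring (conches $x$ in $T$) if $x^{-1}\in R$, $x\notin R$, and $R$ is maximal with respect to inclusion among subrings of $T$ containing $x^{-1}$ but not $x$. *)

theory Defs
  imports "HOL-Algebra.Algebra"
begin

definition conch_subring :: "('a, 'b) ring_scheme \<Rightarrow> 'a \<Rightarrow> 'a set \<Rightarrow> bool" where
  "conch_subring T x R \<longleftrightarrow>
     x \<in> Units T \<and> subring R T \<and> inv\<^bsub>T\<^esub> x \<in> R \<and> x \<notin> R \<and>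
     (\<forall>S. subring S T \<and> inv\<^bsub>T\<^esub> x \<in> S \<and> x \<notin> S \<and> R \<subseteq> S \<longrightarrow> S = R)"

definition ideal_radical :: "('a, 'b) ring_scheme \<Rightarrow> 'a set \<Rightarrow> 'a set" where
  "ideal_radical A I = {a \<in> carrier A. \<exists>n::nat. a [^]\<^bsub>A\<^esub> n \<in> I}"

end

theory Submission
  imports Defs
begin

lemma (in cring) krull_ex:
  assumes "ideal I R" "\<one> \<notin> I"
  shows "\<exists>M. maximalideal M R \<and> I \<subseteq> M"
proof -
  define S where "S = {J. ideal J R \<and> I \<subseteq> J \<and> \<one> \<notin> J}"
  have "\<exists>M\<in>S. \<forall>J\<in>S. M \<subseteq> J \<longrightarrow> J = M"
  proof (rule subset_Zorn)
    fix C assume C: "pred_on.chain S (\<subset>) C"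
    show "\<exists>V\<in>S. \<forall>Y\<in>C. Y \<subseteq> V"
    proof (cases "C = {}")
      case True
      then show ?thesis using assms by (auto simp: S_def)
    next
      case False
      have ch: "pred_on.chain {J. ideal J R} (\<subset>) C"
        using C unfolding pred_on.chain_def S_def by auto
      have "ideal (\<Union>C) R" using chain_Union_is_ideal[OF ch] False by simp
      moreover have "I \<subseteq> \<Union>C"
      proof -
        obtain J0 where "J0 \<in> C" using False by blast
        then show ?thesis using C unfolding pred_on.chain_def S_def by auto
      qed
      moreover have "\<one> \<notin> \<Union>C" using C unfolding pred_on.chain_def S_def by auto
      ultimately show ?thesis unfolding S_def by auto
    qed
  qed
  then obtain M where M: "M \<in> S" "\<And>J. J \<in> S \<Longrightarrow> M \<subseteq> J \<Longrightarrow> J = M" by blast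
  have "maximalideal M R"
  proof (rule maximalidealI)
    show "ideal M R" using M by (simp add: S_def)
    show "carrier R \<noteq> M" using M by (auto simp: S_def)
    fix J assume J: "ideal J R" "M \<subseteq> J" "J \<subseteq> carrier R"
    show "J = M \<or> J = carrier R"
    proof (cases "\<one> \<in> J")
      case True then show ?thesis using ideal.one_imp_carrier[OF J(1)] by simp
    next
      case False
      then have "J \<in> S" using J M(1) by (auto simp: S_def)
      then show ?thesis using M(2) J by simp
    qed
  qed
  then show ?thesis using M(1) by (auto simp: S_def)
qed

lemma (in cring) prime_pow:
  assumes "primeideal Q R" "a \<in> carrier R" "a [^] (n::nat) \<in> Q"
  shows "a \<in> Q"
  using assms(3)
proof (induction n)
  case 0
  then show ?case using assms(1) ideal.one_imp_carrier[OF primeideal.axioms(1)[OF assms(1)]]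
    primeideal.I_notcarr[OF assms(1)] by auto
next
  case (Suc n)
  then have "a [^] n \<otimes> a \<in> Q" by simp
  then show ?case using Suc.IH primeideal.I_prime[OF assms(1)] assms(2) by blast
qed

lemma (in cring) abstract_part:
  assumes u: "u \<in> carrier R" and nu: "\<one> \<notin> PIdl u"
    and dich: "\<And>a. a \<in> carrier R \<Longrightarrow> (\<exists>n::nat. a [^] n \<in> PIdl u) \<or>
        (\<exists>c\<in>carrier R. \<exists>r\<in>carrier R. a \<otimes> c \<oplus> r \<otimes> u = \<one>)"
  shows "\<exists>P. {Q. primeideal Q R \<and> u \<in> Q} = {P} \<and> maximalideal P R
            \<and> ideal_radical R (PIdl u) = P"
proof -
  define P where "P = ideal_radical R (PIdl u)"
  have idl: "ideal (PIdl u) R" by (rule cgenideal_ideal[OF u])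
  have eqP: "Q = P" if Q: "primeideal Q R" "u \<in> Q" for Q
  proof
    have QI: "ideal Q R" using Q(1) primeideal.axioms(1) by blast
    have sub: "PIdl u \<subseteq> Q"
      unfolding cgenideal_def using ideal.I_l_closed[OF QI Q(2)] by auto
    show "P \<subseteq> Q"
    proof
      fix a assume "a \<in> P"
      then obtain n where "a \<in> carrier R" "a [^] (n::nat) \<in> PIdl u"
        unfolding P_def ideal_radical_def by auto
      then show "a \<in> Q" using prime_pow[OF Q(1)] sub by blast
    qed
    show "Q \<subseteq> P"
    proof
      fix a assume aQ: "a \<in> Q"
      have ac: "a \<in> carrier R" using aQ ideal.Icarr[OF QI] by blast
      show "a \<in> P"
      proof (rule ccontr)
        assume "a \<notin> P"
        then have "\<not> (\<exists>n::nat. a [^] n \<in> PIdl u)" using ac unfolding P_def ideal_radical_def by auto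
        then obtain c r where cr: "c \<in> carrier R" "r \<in> carrier R" "a \<otimes> c \<oplus> r \<otimes> u = \<one>"
          using dich[OF ac] by blast
        have "a \<otimes> c \<oplus> r \<otimes> u \<in> Q"
          using ideal.I_r_closed[OF QI aQ cr(1)] ideal.I_l_closed[OF QI Q(2) cr(2)]
            additive_subgroup.a_closed[OF ideal.axioms(1)[OF QI]] by blast
        then have "\<one> \<in> Q" using cr by simp
        then show False using ideal.one_imp_carrier[OF QI] primeideal.I_notcarr[OF Q(1)] by simp
      qed
    qed
  qed
  obtain M where M: "maximalideal M R" "PIdl u \<subseteq> M" using krull_ex[OF idl nu] by blast
  have uM: "u \<in> M" proof -
    have "\<one> \<otimes> u \<in> PIdl u" unfolding cgenideal_def by blast
    then show ?thesis using M(2) u by auto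
  qed
  have pM: "primeideal M R" using maximalideal_prime[OF M(1)] .
  have MP: "M = P" using eqP[OF pM uM] .
  show ?thesis
  proof (intro exI conjI)
    show "{Q. primeideal Q R \<and> u \<in> Q} = {P}"
    proof
      show "{Q. primeideal Q R \<and> u \<in> Q} \<subseteq> {P}" using eqP by blast
      show "{P} \<subseteq> {Q. primeideal Q R \<and> u \<in> Q}" using pM uM MP by blast
    qed
    show "maximalideal P R" using M(1) MP by simp
    show "ideal_radical R (PIdl u) = P" by (simp add: P_def)
  qed
qed

lemma key_dich:
  fixes T (structure)
  assumes cr: "cring T" and conch: "conch_subring T x R" and aR: "a \<in> R"
    and nrad: "\<And>n::nat. \<And>y. y \<in> R \<Longrightarrow> a [^] n \<noteq> y \<otimes> inv x"
  shows "\<exists>c\<in>R. \<exists>r\<in>R. a \<otimes> c \<oplus> r \<otimes> inv x = \<one>"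
proof -
  interpret cring T by (rule cr)
  define u where "u = inv x"
  have xU: "x \<in> Units T" and sub: "subring R T" and uR: "u \<in> R" and xnR: "x \<notin> R"
    and mx: "\<And>S. subring S T \<Longrightarrow> u \<in> S \<Longrightarrow> x \<notin> S \<Longrightarrow> R \<subseteq> S \<Longrightarrow> S = R"
    using conch unfolding conch_subring_def u_def by auto
  have RC: "R \<subseteq> carrier T" using subringE(1)[OF sub] .
  have xc: "x \<in> carrier T" using xU by (rule Units_closed)
  have uc: "u \<in> carrier T" using xU Units_inv_closed u_def by simp
  have xu: "x \<otimes> u = \<one>" using xU Units_r_inv u_def by simp
  have ux: "u \<otimes> x = \<one>" using xU Units_l_inv u_def by simp
  have ac: "a \<in> carrier T" using aR RC by blast
  have Rm: "\<And>p q. p \<in> R \<Longrightarrow> q \<in> R \<Longrightarrow> p \<otimes> q \<in> R" using subringE(6)[OF sub] by blast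
  have Ra: "\<And>p q. p \<in> R \<Longrightarrow> q \<in> R \<Longrightarrow> p \<oplus> q \<in> R" using subringE(7)[OF sub] by blast
  have Rn: "\<And>p. p \<in> R \<Longrightarrow> \<ominus> p \<in> R" using subringE(5)[OF sub] by blast
  have R1: "\<one> \<in> R" and R0: "\<zero> \<in> R" using subringE(2,3)[OF sub] by auto
  have Rp: "\<And>p n. p \<in> R \<Longrightarrow> p [^] (n::nat) \<in> R"
  proof -
    fix p and n :: nat assume "p \<in> R"
    then show "p [^] n \<in> R" by (induction n) (auto simp: R1 Rm)
  qed
  \<comment> \<open>Step 1: closure under division by a\<close>
  define S1 where "S1 = {t \<in> carrier T. \<exists>k::nat. a [^] k \<otimes> t \<in> R}"
  have S1sub: "subring S1 T"
  proof (rule subringI)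
    show "S1 \<subseteq> carrier T" unfolding S1_def by auto
    show "\<one> \<in> S1" unfolding S1_def using R1 by (auto intro: exI[of _ 0])
    fix h1 h2 assume h1: "h1 \<in> S1" and h2: "h2 \<in> S1"
    then obtain k l :: nat where k: "a [^] k \<otimes> h1 \<in> R" and l: "a [^] l \<otimes> h2 \<in> R"
      and c1: "h1 \<in> carrier T" and c2: "h2 \<in> carrier T" unfolding S1_def by auto
    have pk: "a [^] k \<in> carrier T" and pl: "a [^] l \<in> carrier T" using ac by auto
    have "a [^] k \<otimes> (\<ominus> h1) = \<ominus> (a [^] k \<otimes> h1)" using pk c1 by algebra
    then show "\<ominus> h1 \<in> S1" using Rn[OF k] c1 unfolding S1_def by (auto intro!: exI[of _ k])
    have e: "a [^] (k + l) = a [^] k \<otimes> a [^] l" using ac by (simp add: nat_pow_mult)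
    have "a [^] (k + l) \<otimes> (h1 \<otimes> h2) = (a [^] k \<otimes> h1) \<otimes> (a [^] l \<otimes> h2)"
      unfolding e using pk pl c1 c2 by algebra
    then show "h1 \<otimes> h2 \<in> S1" using Rm[OF k l] c1 c2 unfolding S1_def
      by (auto intro!: exI[of _ "k + l"])
    have "a [^] (k + l) \<otimes> (h1 \<oplus> h2) = a [^] l \<otimes> (a [^] k \<otimes> h1) \<oplus> a [^] k \<otimes> (a [^] l \<otimes> h2)"
      unfolding e using pk pl c1 c2 by algebra
    moreover have "a [^] l \<in> R" "a [^] k \<in> R" using Rp aR by auto
    ultimately show "h1 \<oplus> h2 \<in> S1" using Rm Ra k l c1 c2 unfolding S1_def
      by (auto intro!: exI[of _ "k + l"])
  qed
  have RS1: "R \<subseteq> S1" unfolding S1_def using RC by (auto intro!: exI[of _ 0])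
  have xS1: "x \<notin> S1"
  proof
    assume "x \<in> S1"
    then obtain k :: nat where k: "a [^] k \<otimes> x \<in> R" unfolding S1_def by auto
    have "a [^] k = (a [^] k \<otimes> x) \<otimes> u" using ac xc uc xu by (simp add: m_assoc)
    then show False using nrad[OF k] u_def by simp
  qed
  have S1R: "S1 = R" using mx[OF S1sub] RS1 uR xS1 by blast
  have clos: "\<And>t. t \<in> carrier T \<Longrightarrow> a \<otimes> t \<in> R \<Longrightarrow> t \<in> R"
  proof -
    fix t assume "t \<in> carrier T" "a \<otimes> t \<in> R"
    then have "t \<in> S1" unfolding S1_def using ac by (auto intro!: exI[of _ 1])
    then show "t \<in> R" using S1R by simp
  qed
  have axR: "a \<otimes> x \<notin> R"
  proof
    assume h: "a \<otimes> x \<in> R"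
    have "a [^] (1::nat) = (a \<otimes> x) \<otimes> u" using ac xc uc xu by (simp add: m_assoc)
    then show False using nrad[OF h] u_def by blast
  qed
  define S2 where "S2 = {t \<in> carrier T. \<exists>r\<in>R. \<exists>w\<in>carrier T. \<exists>k::nat. \<exists>b\<in>R.
      t = r \<oplus> w \<and> u [^] k \<otimes> w = a \<otimes> b}"
  have S2sub: "subring S2 T"
  proof (rule subringI)
    show "S2 \<subseteq> carrier T" unfolding S2_def by auto
    have "\<one> = \<one> \<oplus> \<zero> \<and> u [^] (0::nat) \<otimes> \<zero> = a \<otimes> \<zero>" using ac by simp
    then show "\<one> \<in> S2" unfolding S2_def using R1 R0 by blast
    fix h1 h2 assume h1: "h1 \<in> S2" and h2: "h2 \<in> S2"
    then obtain r1 w1 and k1 :: nat and b1 where r1: "r1 \<in> R" and w1: "w1 \<in> carrier T" and b1: "b1 \<in> R"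
      and e1: "h1 = r1 \<oplus> w1" and f1: "u [^] k1 \<otimes> w1 = a \<otimes> b1" unfolding S2_def by blast
    obtain r2 w2 and k2 :: nat and b2 where r2: "r2 \<in> R" and w2: "w2 \<in> carrier T" and b2: "b2 \<in> R"
      and e2: "h2 = r2 \<oplus> w2" and f2: "u [^] k2 \<otimes> w2 = a \<otimes> b2" using h2 unfolding S2_def by blast
    have r1c: "r1 \<in> carrier T" and r2c: "r2 \<in> carrier T" and b1c: "b1 \<in> carrier T"
      and b2c: "b2 \<in> carrier T" using RC r1 r2 b1 b2 by auto
    have p1: "u [^] k1 \<in> carrier T" and p2: "u [^] k2 \<in> carrier T" using uc by auto
    have p1R: "u [^] k1 \<in> R" and p2R: "u [^] k2 \<in> R" using Rp uR by auto
    have e: "u [^] (k1 + k2) = u [^] k1 \<otimes> u [^] k2" using uc by (simp add: nat_pow_mult)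
    have "\<ominus> h1 = \<ominus> r1 \<oplus> \<ominus> w1 \<and> u [^] k1 \<otimes> (\<ominus> w1) = a \<otimes> (\<ominus> b1)"
      using e1 f1 r1c w1 p1 ac b1c
      by (metis a_minus_def minus_add minus_equality r_minus add.inv_closed)
    then show "\<ominus> h1 \<in> S2" unfolding S2_def using Rn r1 b1 w1 e1 r1c by blast
    have "h1 \<oplus> h2 = (r1 \<oplus> r2) \<oplus> (w1 \<oplus> w2)" using e1 e2 r1c r2c w1 w2 by algebra
    moreover have "u [^] (k1 + k2) \<otimes> (w1 \<oplus> w2) = a \<otimes> (u [^] k2 \<otimes> b1 \<oplus> u [^] k1 \<otimes> b2)"
    proof -
      have "u [^] (k1 + k2) \<otimes> (w1 \<oplus> w2) = u [^] k2 \<otimes> (u [^] k1 \<otimes> w1) \<oplus> u [^] k1 \<otimes> (u [^] k2 \<otimes> w2)"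
        unfolding e using p1 p2 w1 w2 by algebra
      also have "\<dots> = a \<otimes> (u [^] k2 \<otimes> b1 \<oplus> u [^] k1 \<otimes> b2)"
        unfolding f1 f2 using p1 p2 ac b1c b2c by algebra
      finally show ?thesis .
    qed
    moreover have "u [^] k2 \<otimes> b1 \<oplus> u [^] k1 \<otimes> b2 \<in> R" using Rm Ra p1R p2R b1 b2 by blast
    moreover have "r1 \<oplus> r2 \<in> R" using Ra r1 r2 by blast
    ultimately show "h1 \<oplus> h2 \<in> S2" unfolding S2_def using w1 w2 r1c r2c e1 e2 by blast
    have "h1 \<otimes> h2 = (r1 \<otimes> r2) \<oplus> (w1 \<otimes> w2 \<oplus> r1 \<otimes> w2 \<oplus> r2 \<otimes> w1)" using e1 e2 r1c r2c w1 w2 by algebra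
    moreover have "u [^] (k1 + k2) \<otimes> (w1 \<otimes> w2 \<oplus> r1 \<otimes> w2 \<oplus> r2 \<otimes> w1)
        = a \<otimes> (a \<otimes> b1 \<otimes> b2 \<oplus> r1 \<otimes> u [^] k1 \<otimes> b2 \<oplus> r2 \<otimes> u [^] k2 \<otimes> b1)"
    proof -
      have "u [^] (k1 + k2) \<otimes> (w1 \<otimes> w2 \<oplus> r1 \<otimes> w2 \<oplus> r2 \<otimes> w1)
          = (u [^] k1 \<otimes> w1) \<otimes> (u [^] k2 \<otimes> w2) \<oplus> r1 \<otimes> u [^] k1 \<otimes> (u [^] k2 \<otimes> w2)
            \<oplus> r2 \<otimes> u [^] k2 \<otimes> (u [^] k1 \<otimes> w1)"
        unfolding e using p1 p2 w1 w2 r1c r2c by algebra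
      also have "\<dots> = a \<otimes> (a \<otimes> b1 \<otimes> b2 \<oplus> r1 \<otimes> u [^] k1 \<otimes> b2 \<oplus> r2 \<otimes> u [^] k2 \<otimes> b1)"
        unfolding f1 f2 using p1 p2 ac b1c b2c r1c r2c by algebra
      finally show ?thesis .
    qed
    moreover have "a \<otimes> b1 \<otimes> b2 \<oplus> r1 \<otimes> u [^] k1 \<otimes> b2 \<oplus> r2 \<otimes> u [^] k2 \<otimes> b1 \<in> R"
      using Rm Ra p1R p2R b1 b2 r1 r2 aR by meson
    moreover have "r1 \<otimes> r2 \<in> R" using Rm r1 r2 by blast
    moreover have "w1 \<otimes> w2 \<oplus> r1 \<otimes> w2 \<oplus> r2 \<otimes> w1 \<in> carrier T" using w1 w2 r1c r2c by simp
    ultimately show "h1 \<otimes> h2 \<in> S2" unfolding S2_def using w1 w2 r1c r2c e1 e2 by blast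
  qed
  have RS2: "R \<subseteq> S2"
  proof
    fix t assume t: "t \<in> R"
    then have "t = t \<oplus> \<zero> \<and> u [^] (0::nat) \<otimes> \<zero> = a \<otimes> \<zero>" using RC ac by auto
    then show "t \<in> S2" unfolding S2_def using t RC R0 by blast
  qed
  have axS2: "a \<otimes> x \<in> S2"
  proof -
    have "a \<otimes> x = \<zero> \<oplus> a \<otimes> x" using ac xc by simp
    moreover have "u [^] (1::nat) \<otimes> (a \<otimes> x) = a \<otimes> \<one>"
      using uc ac xc ux by (simp add: m_lcomm)
    ultimately show ?thesis unfolding S2_def using R0 R1 ac xc by blast
  qed
  have xS2: "x \<in> S2" using mx[OF S2sub] RS2 axS2 axR uR RS2 by blast
  then obtain r w and k :: nat and b where r: "r \<in> R" and w: "w \<in> carrier T" and b: "b \<in> R"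
    and e: "x = r \<oplus> w" and f: "u [^] k \<otimes> w = a \<otimes> b" unfolding S2_def by blast
  have rc: "r \<in> carrier T" and bc: "b \<in> carrier T" using r b RC by auto
  define z where "z = \<one> \<ominus> u \<otimes> r"
  have zc: "z \<in> carrier T" unfolding z_def using uc rc by simp
  have zR: "z \<in> R" unfolding z_def a_minus_def using Ra Rn Rm R1 uR r by blast
  have uw: "u \<otimes> w = z"
  proof -
    have "u \<otimes> x = u \<otimes> r \<oplus> u \<otimes> w" unfolding e using uc rc w by algebra
    then show ?thesis unfolding z_def using ux uc rc w by algebra
  qed
  have start: "u [^] k \<otimes> z = a \<otimes> (u \<otimes> b)"
  proof -
    have "u [^] k \<otimes> z = u \<otimes> (u [^] k \<otimes> w)" unfolding uw[symmetric] using uc w nat_pow_closed[OF uc, of k] by algebra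
    then show ?thesis unfolding f using uc ac bc by algebra
  qed
  have ind: "\<And>bb. bb \<in> R \<Longrightarrow> u [^] n \<otimes> z = a \<otimes> bb \<Longrightarrow> \<exists>b'\<in>R. z = a \<otimes> b'" for n :: nat
  proof (induction n)
    case 0
    then show ?case using zc by auto
  next
    case (Suc n)
    have bbc: "bb \<in> carrier T" using Suc.prems RC by auto
    have pc: "u [^] n \<in> carrier T" using uc by simp
    have "u [^] n \<otimes> z = x \<otimes> (u [^] Suc n \<otimes> z)"
      using pc uc xc zc xu by (simp add: m_assoc[symmetric] m_comm m_lcomm)
    also have "\<dots> = a \<otimes> (x \<otimes> bb)" unfolding Suc.prems(2) using xc ac bbc by algebra
    finally have h: "u [^] n \<otimes> z = a \<otimes> (x \<otimes> bb)" .
    have "a \<otimes> (x \<otimes> bb) \<in> R" unfolding h[symmetric] using Rm Rp uR zR by blast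
    then have "x \<otimes> bb \<in> R" using clos xc bbc by blast
    then show ?case using Suc.IH h by blast
  qed
  obtain b' where b': "b' \<in> R" "z = a \<otimes> b'" using ind[OF _ start] Rm uR b by blast
  have b'c: "b' \<in> carrier T" using b'(1) RC by auto
  have "a \<otimes> b' \<oplus> r \<otimes> u = (\<one> \<ominus> u \<otimes> r) \<oplus> r \<otimes> u"
    using b'(2) unfolding z_def by simp
  also have "\<dots> = \<one>" using rc uc by algebra
  finally have "a \<otimes> b' \<oplus> r \<otimes> u = \<one>" .
  then show ?thesis using b'(1) r u_def by blast
qed

lemma pow_carrier_upd:
  "a [^]\<^bsub>T\<lparr>carrier := R\<rparr>\<^esub> (n::nat) = a [^]\<^bsub>T\<^esub> n"
  by (simp add: nat_pow_def)

theorem corollary1p2: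
  fixes T :: "('a, 'b) ring_scheme" and x :: 'a and R :: "'a set"
  assumes "cring T" and "\<one>\<^bsub>T\<^esub> \<noteq> \<zero>\<^bsub>T\<^esub>"
    and "x \<in> Units T"
    and "conch_subring T x R"
  shows "\<exists>P. {Q. primeideal Q (T\<lparr>carrier := R\<rparr>) \<and> inv\<^bsub>T\<^esub> x \<in> Q} = {P}
            \<and> maximalideal P (T\<lparr>carrier := R\<rparr>)
            \<and> ideal_radical (T\<lparr>carrier := R\<rparr>) (PIdl\<^bsub>T\<lparr>carrier := R\<rparr>\<^esub> (inv\<^bsub>T\<^esub> x)) = P"
proof -
  interpret T: cring T by (rule assms(1))
  define u where "u = inv\<^bsub>T\<^esub> x"
  have xU: "x \<in> Units T" and sub: "subring R T" and uR: "u \<in> R" and xnR: "x \<notin> R"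
    using assms(4) unfolding conch_subring_def u_def by auto
  have RC: "R \<subseteq> carrier T" using subringE(1)[OF sub] .
  have xc: "x \<in> carrier T" using xU by (rule T.Units_closed)
  have uc: "u \<in> carrier T" using xU T.Units_inv_closed u_def by simp
  have xu: "x \<otimes>\<^bsub>T\<^esub> u = \<one>\<^bsub>T\<^esub>" using xU T.Units_r_inv u_def by simp
  have ux: "u \<otimes>\<^bsub>T\<^esub> x = \<one>\<^bsub>T\<^esub>" using xU T.Units_l_inv u_def by simp
  have crA: "cring (T\<lparr>carrier := R\<rparr>)"
    using T.subcring_iff[OF RC] T.subcringI'[OF sub] by simp
  interpret A: cring "T\<lparr>carrier := R\<rparr>" by (rule crA)
  have PI: "PIdl\<^bsub>T\<lparr>carrier := R\<rparr>\<^esub> u = {y \<otimes>\<^bsub>T\<^esub> u | y. y \<in> R}"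
    unfolding cgenideal_def by simp
  have "\<exists>P. {Q. primeideal Q (T\<lparr>carrier := R\<rparr>) \<and> u \<in> Q} = {P}
            \<and> maximalideal P (T\<lparr>carrier := R\<rparr>)
            \<and> ideal_radical (T\<lparr>carrier := R\<rparr>) (PIdl\<^bsub>T\<lparr>carrier := R\<rparr>\<^esub> u) = P"
  proof (rule A.abstract_part)
    show "u \<in> carrier (T\<lparr>carrier := R\<rparr>)" using uR by simp
    show "\<one>\<^bsub>T\<lparr>carrier := R\<rparr>\<^esub> \<notin> PIdl\<^bsub>T\<lparr>carrier := R\<rparr>\<^esub> u"
    proof
      assume "\<one>\<^bsub>T\<lparr>carrier := R\<rparr>\<^esub> \<in> PIdl\<^bsub>T\<lparr>carrier := R\<rparr>\<^esub> u"
      then obtain y where y: "y \<in> R" "\<one>\<^bsub>T\<^esub> = y \<otimes>\<^bsub>T\<^esub> u" unfolding PI by auto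
      have yc: "y \<in> carrier T" using y RC by auto
      have "y = y \<otimes>\<^bsub>T\<^esub> (u \<otimes>\<^bsub>T\<^esub> x)" using ux yc by simp
      also have "\<dots> = x" using y(2) yc uc xc by (simp add: T.m_assoc[symmetric] y(2)[symmetric])
      finally show False using y(1) xnR by simp
    qed
    fix a assume a: "a \<in> carrier (T\<lparr>carrier := R\<rparr>)"
    then have aR: "a \<in> R" by simp
    show "(\<exists>n::nat. a [^]\<^bsub>T\<lparr>carrier := R\<rparr>\<^esub> n \<in> PIdl\<^bsub>T\<lparr>carrier := R\<rparr>\<^esub> u) \<or>
        (\<exists>c\<in>carrier (T\<lparr>carrier := R\<rparr>). \<exists>r\<in>carrier (T\<lparr>carrier := R\<rparr>).
           a \<otimes>\<^bsub>T\<lparr>carrier := R\<rparr>\<^esub> c \<oplus>\<^bsub>T\<lparr>carrier := R\<rparr>\<^esub> r \<otimes>\<^bsub>T\<lparr>carrier := R\<rparr>\<^esub> u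
             = \<one>\<^bsub>T\<lparr>carrier := R\<rparr>\<^esub>)"
    proof (cases "\<exists>n::nat. \<exists>y\<in>R. a [^]\<^bsub>T\<^esub> n = y \<otimes>\<^bsub>T\<^esub> u")
      case True
      then show ?thesis unfolding PI pow_carrier_upd by blast
    next
      case False
      then have "\<exists>c\<in>R. \<exists>r\<in>R. a \<otimes>\<^bsub>T\<^esub> c \<oplus>\<^bsub>T\<^esub> r \<otimes>\<^bsub>T\<^esub> inv\<^bsub>T\<^esub> x = \<one>\<^bsub>T\<^esub>"
        using key_dich[OF assms(1) assms(4) aR] u_def by blast
      then show ?thesis using u_def by simp
    qed
  qed
  then show ?thesis unfolding u_def .
qed

end
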